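(* Let $X_1,X_2,\dots,X_n$ be independent random variables uniformly distributed on $[0,1]$, observed sequentially; at time $i$, after seeing $X_i$, one must irrevocably decide whether to select it, the selected values being required to form a monotone decreasing sequence $X_{i_1}>X_{i_2}>\cdots>X_{i_k}$ with $i_1<\cdots<i_k$, and decisions may depend only on $X_1,\dots,X_i$. Let $\widetilde V_n$ be the number of values selected under an optimal policy (one maximizing the expected number of selections); equivalently $\mathbb{E}[\widetilde V_n]=\widetilde v_n(1)$ where $\widetilde v_0\equiv0$ and $\widetilde v_n(x)=(1-x)\widetilde v_{n-1}(x)+\int_0^x\max\{\widetilde v_{n-1}(x),1+\widetilde v_{n-1}(y)\}dy$ for $x\in[0,1]$. Then $\mathbb{E}[\widetilde V_n]=\widetilde v_n(1)\le\sqrt{2n}$ for all $n\ge1$. *)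

theory Defs
  imports "HOL-Analysis.Analysis"
begin

text \<open>Value function of the optimal online decreasing-subsequence selection problem
  for n i.i.d. uniform[0,1] observations, where x is the last selected value
  (initially 1). vtilde n 1 is the optimal expected number of selections.\<close>

fun vtilde :: "nat \<Rightarrow> real \<Rightarrow> real" where
  "vtilde 0 x = 0"
| "vtilde (Suc n) x =
     (1 - x) * vtilde n x + integral {0..x} (\<lambda>y. max (vtilde n x) (1 + vtilde n y))"

end

theory Submission
  imports Defs
begin

lemma ineqA:
  fixes s t r :: real
  assumes "0 \<le> t" "t \<le> 1" "s\<^sup>2 \<ge> 2" "s \<ge> 0" "r \<ge> 0" "r\<^sup>2 = s\<^sup>2 + 2" "s*t \<le> 1"
  shows "(1 - t\<^sup>2) * (s*t) + (t\<^sup>2 + 2/3 * s * (t\<^sup>2 * t)) \<le> r * t"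
proof -
  define a where "a = s*t"
  have a0: "0 \<le> a" using assms by (simp add: a_def)
  have "0 \<le> (1-a)*(2-a)" using a0 assms(7) a_def by (intro mult_nonneg_nonneg) auto
  hence h1: "a - a\<^sup>2/3 \<le> 2/3" by (simp add: algebra_simps power2_eq_square)
  have e1: "(r * s)^2 = (s\<^sup>2 + 2) * s\<^sup>2" by (simp add: power_mult_distrib assms(6))
  have "(s\<^sup>2 + 2/3)^2 \<le> (s\<^sup>2 + 2) * s\<^sup>2"
  proof -
    define w where "w = s\<^sup>2"
    have "w \<ge> 2" using assms(3) w_def by simp
    hence "(w + 2/3)^2 \<le> (w + 2) * w" by (simp add: power2_eq_square algebra_simps)
    thus ?thesis using w_def by simp
  qed
  hence "(s\<^sup>2 + 2/3)^2 \<le> (r * s)^2" using e1 by linarith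
  hence h2: "s\<^sup>2 + 2/3 \<le> r * s" by (rule power2_le_imp_le) (use assms(4,5) in simp)
  have s0: "s > 0" using assms(3,4) by (cases "s = 0") auto
  have "s * (s + t - s*t\<^sup>2/3) = s\<^sup>2 + a - a\<^sup>2/3"
    by (simp add: a_def power2_eq_square algebra_simps)
  also have "\<dots> \<le> s * r" using h1 h2 by (simp add: mult.commute)
  finally have "s + t - s*t\<^sup>2/3 \<le> r" using s0 by simp
  hence "t * (s + t - s*t\<^sup>2/3) \<le> t * r" using assms(1) by (intro mult_left_mono)
  moreover have "(1 - t\<^sup>2) * (s*t) + (t\<^sup>2 + 2/3 * s * (t\<^sup>2 * t)) = t * (s + t - s*t\<^sup>2/3)"
    by (simp add: power2_eq_square algebra_simps)
  ultimately show ?thesis by (simp add: mult.commute)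
qed

lemma ineqB:
  fixes s t r u :: real
  assumes "0 \<le> t" "t \<le> 1" "s\<^sup>2 \<ge> 2" "s \<ge> 0" "r \<ge> 0" "r\<^sup>2 = s\<^sup>2 + 2" "s*t \<ge> 1"
    and su: "s * u = s * t - 1"
  shows "(1 - t\<^sup>2) * (s*t) + (s*t) * u\<^sup>2 + ((t\<^sup>2 - u\<^sup>2)
      + 2/3 * s * (t\<^sup>2 * t - u\<^sup>2 * u)) \<le> r * t"
proof -
  define a where "a = s*t"
  define E where "E = (1 - t\<^sup>2) * (s*t) + (s*t) * u\<^sup>2 + ((t\<^sup>2 - u\<^sup>2)
      + 2/3 * s * (t\<^sup>2 * t - u\<^sup>2 * u))"
  have s0: "s > 0" using assms(3,4) by (cases "s = 0") auto
  have "s\<^sup>2 * E = a* s\<^sup>2 - (s*t)\<^sup>2*a + a*(s*u)\<^sup>2 + (s*t)\<^sup>2 - (s*u)\<^sup>2 + 2/3*((s*t)^3 - (s*u)^3)"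
    unfolding E_def a_def by (simp add: algebra_simps power2_eq_square power3_eq_cube)
  also have "\<dots> = a* s\<^sup>2 - a^3 + a*(a-1)\<^sup>2 + a\<^sup>2 - (a-1)\<^sup>2 + 2/3*(a^3 - (a-1)^3)"
    using su unfolding a_def by (simp add: power2_eq_square power3_eq_cube)
  also have "\<dots> = a* s\<^sup>2 + a - 1/3"
    by (simp add: algebra_simps power2_eq_square power3_eq_cube)
  finally have eq: "s\<^sup>2 * E = a* s\<^sup>2 + a - 1/3" .
  have rs: "r \<ge> s" by (rule power2_le_imp_le) (use assms(5,6) in simp_all)
  define d where "d = s\<^sup>2 + 1 - r * s"
  have "d * (s\<^sup>2 + 1 + r * s) = (s\<^sup>2 + 1)^2 - r\<^sup>2 * s\<^sup>2"
    unfolding d_def by (simp add: power2_eq_square algebra_simps)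
  also have "\<dots> = (s\<^sup>2 + 1)^2 - (s\<^sup>2 + 2) * s\<^sup>2" using assms(6) by simp
  also have "\<dots> = 1" by (simp add: power2_eq_square algebra_simps)
  finally have dd: "d * (s\<^sup>2 + 1 + r * s) = 1" .
  have pos: "s\<^sup>2 + 1 + r * s > 0" using s0 assms(5) by (simp add: add_pos_nonneg)
  have d0: "d > 0" using dd pos by (metis zero_less_mult_pos2 zero_less_one)
  have "r * s \<ge> s\<^sup>2" using rs s0 by (simp add: power2_eq_square)
  hence "d * (2* s\<^sup>2+1) \<le> d * (s\<^sup>2 + 1 + r * s)" using d0 by (intro mult_left_mono) auto
  hence d1: "d * (2* s\<^sup>2+1) \<le> 1" using dd by simp
  have "s \<ge> 1" using assms(3) s0 by (smt (verit) power2_le_imp_le one_power2)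
  hence "0 \<le> (2* s-1)*(s-1)" by simp
  hence "3* s \<le> 2* s\<^sup>2+1" by (simp add: power2_eq_square algebra_simps)
  hence "3 * s * d \<le> (2* s\<^sup>2+1) * d" using d0 by (intro mult_right_mono) auto
  hence d2: "3 * s * d \<le> 1" using d1 by (simp add: mult.commute)
  have "a \<le> s" using assms s0 a_def by (simp add: mult_left_le)
  hence "a * d \<le> s * d" using d0 by (intro mult_right_mono) auto
  hence "a * d \<le> 1/3" using d2 by simp
  hence "a * s\<^sup>2 + a - 1/3 \<le> r * s * a" unfolding d_def by (simp add: algebra_simps)
  hence "s\<^sup>2 * E \<le> s\<^sup>2 * (r*t)" using eq
    by (simp add: a_def power2_eq_square algebra_simps)
  hence "E \<le> r*t" using s0 by simp
  thus ?thesis unfolding E_def .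
qed
lemma intsq:
  fixes s p q :: real
  assumes "0 \<le> p" "p \<le> q"
  shows "((\<lambda>y. 1 + s * sqrt y) has_integral (q - p + 2/3 * s * (q * sqrt q - p * sqrt p))) {p..q}"
proof -
  define F where "F = (\<lambda>y::real. y + 2/3 * s * (y * sqrt y))"
  have "((\<lambda>y. 1 + s * sqrt y) has_integral (F q - F p)) {p..q}"
  proof (rule fundamental_theorem_of_calculus_interior)
    show "p \<le> q" by fact
    show "continuous_on {p..q} F" unfolding F_def by (intro continuous_intros)
    fix y assume y: "y \<in> {p<..<q}"
    hence y0: "y > 0" using assms by auto
    have d1: "((\<lambda>y. y * sqrt y) has_real_derivative (1 * sqrt y + inverse (sqrt y) / 2 * y)) (at y)"
      by (rule DERIV_mult[OF DERIV_ident DERIV_real_sqrt[OF y0]])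
    have "(F has_real_derivative (1 + 2/3 * s * (1 * sqrt y + inverse (sqrt y) / 2 * y))) (at y)"
      unfolding F_def by (rule DERIV_add[OF DERIV_ident DERIV_cmult[OF d1]])
    moreover have "1 + 2/3 * s * (1 * sqrt y + inverse (sqrt y) / 2 * y) = 1 + s * sqrt y"
    proof -
      have "y * inverse (sqrt y) = sqrt y" using y0
        by (metis divide_inverse real_div_sqrt less_imp_le)
      thus ?thesis by (simp add: algebra_simps)
    qed
    ultimately have "(F has_real_derivative (1 + s * sqrt y)) (at y)" by metis
    thus "(F has_vector_derivative (1 + s * sqrt y)) (at y)"
      by (simp add: has_real_derivative_iff_has_vector_derivative)
  qed
  moreover have "F q - F p = q - p + 2/3 * s * (q * sqrt q - p * sqrt p)"
    unfolding F_def by (simp add: field_simps)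
  ultimately show ?thesis by simp
qed

lemma explicitE:
  fixes m :: nat and x :: real
  assumes x0: "0 \<le> x" and x1: "x \<le> 1"
  shows "\<exists>J. ((\<lambda>y. max (sqrt (2 * real m * x)) (1 + sqrt (2 * real m * y))) has_integral J) {0..x}
     \<and> (1 - x) * sqrt (2 * real m * x) + J \<le> sqrt (2 * real (Suc m) * x)"
proof -
  define s where "s = sqrt (2 * real m)"
  define t where "t = sqrt x"
  define r where "r = sqrt (2 * real (Suc m))"
  define g where "g = (\<lambda>y. max (sqrt (2 * real m * x)) (1 + sqrt (2 * real m * y)))"
  have sq: "sqrt (2 * real m * y) = s * sqrt y" for y by (simp add: s_def real_sqrt_mult)
  have xt: "x = t\<^sup>2" using x0 by (simp add: t_def)
  have t0: "0 \<le> t" and t1: "t \<le> 1" using x0 x1 by (auto simp: t_def)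
  have s0: "0 \<le> s" and r0: "0 \<le> r" by (auto simp: s_def r_def)
  have ss: "s\<^sup>2 = 2 * real m" by (simp add: s_def)
  have rr: "r\<^sup>2 = s\<^sup>2 + 2" by (simp add: r_def ss)
  have rhs: "sqrt (2 * real (Suc m) * x) = r * t" by (simp add: r_def t_def real_sqrt_mult)
  have lhs: "sqrt (2 * real m * x) = s * t" by (simp add: sq t_def)
  have gy: "g y = max (s * t) (1 + s * sqrt y)" for y by (simp add: g_def lhs sq t_def)
  have fin: "?thesis" if h1: "(g has_integral J) {0..x}" and h2: "(1 - t\<^sup>2) * (s * t) + J \<le> r * t" for J
  proof -
    have e: "(1 - x) * sqrt (2 * real m * x) = (1 - t\<^sup>2) * (s * t)" using lhs xt by simp
    show ?thesis
      apply (rule exI[of _ J])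
      using h1[unfolded g_def] h2 e rhs by simp
  qed
  show ?thesis
  proof (cases "m = 0")
    case True
    have gint: "(g has_integral x) {0..x}"
    proof -
      have "((\<lambda>y. 1::real) has_integral x) {0..x}"
        using has_integral_const_real[of "1::real" 0 x] x0 by simp
      moreover have "g = (\<lambda>y. 1)" using True by (simp add: g_def fun_eq_iff)
      ultimately show ?thesis by simp
    qed
    moreover have "x \<le> sqrt (2 * x)"
    proof -
      have "x\<^sup>2 \<le> 2 * x" using x0 x1 by (simp add: power2_eq_square) (smt (verit) mult_right_le_one_le)
      hence "sqrt (x\<^sup>2) \<le> sqrt (2 * x)" by (rule real_sqrt_le_mono)
      thus ?thesis using x0 by simp
    qed
    moreover have "s = 0" using True by (simp add: s_def)
    moreover have "r * t = sqrt (2 * x)" using rhs True by simp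
    ultimately show ?thesis by (intro fin[OF gint]) simp
  next
    case False
    hence s2: "s\<^sup>2 \<ge> 2" using ss by simp
    have spos: "s > 0" using s2 s0 by (cases "s = 0") auto
    show ?thesis
    proof (cases "s * t \<le> 1")
      case True
      have "((\<lambda>y. 1 + s * sqrt y) has_integral (x - 0 + 2/3 * s * (x * sqrt x - 0 * sqrt 0))) {0..x}"
        by (rule intsq) (use x0 in auto)
      moreover have ge: "g y = 1 + s * sqrt y" if "y \<in> {0..x}" for y
      proof -
        have "0 \<le> s * sqrt y" using s0 that by simp
        thus ?thesis using True by (simp add: gy)
      qed
      ultimately have "(g has_integral (x - 0 + 2/3 * s * (x * sqrt x - 0 * sqrt 0))) {0..x}"
        by (intro has_integral_eq[of "{0..x}" "\<lambda>y. 1 + s * sqrt y" g]) (simp_all add: ge)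
      moreover have "x - 0 + 2/3 * s * (x * sqrt x - 0 * sqrt 0) = t\<^sup>2 + 2/3 * s * (t\<^sup>2 * t)"
        using t0 by (simp add: xt)
      ultimately have "(g has_integral (t\<^sup>2 + 2/3 * s * (t\<^sup>2 * t))) {0..x}" by simp
      moreover have "(1 - t\<^sup>2) * (s * t) + (t\<^sup>2 + 2/3 * s * (t\<^sup>2 * t)) \<le> r * t"
        by (rule ineqA) (use t0 t1 s2 s0 r0 rr True in auto)
      ultimately show ?thesis by (rule fin)
    next
      case False
      define u where "u = (s * t - 1) / s"
      have su: "s * u = s * t - 1" using spos by (simp add: u_def)
      have u0: "0 \<le> u" using False spos by (simp add: u_def)
      have ut: "u \<le> t" using spos su by (smt (verit) mult_left_mono)
      have y0x: "u\<^sup>2 \<le> x" using xt u0 ut by (simp add: power_mono)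
      have I1: "(g has_integral (s * t * u\<^sup>2)) {0..u\<^sup>2}"
      proof -
        have ge: "g y = s * t" if "y \<in> {0..u\<^sup>2}" for y
        proof -
          have "sqrt y \<le> sqrt (u\<^sup>2)" using that by (intro real_sqrt_le_mono) simp
          hence "sqrt y \<le> u" using u0 by simp
          hence "s * sqrt y \<le> s * u" using s0 by (rule mult_left_mono)
          thus ?thesis using su by (simp add: gy)
        qed
        have ci: "((\<lambda>y. s * t) has_integral (s * t * u\<^sup>2)) {0..u\<^sup>2}"
          using has_integral_const_real[of "s * t" 0 "u\<^sup>2"] by (simp add: mult.commute)
        show ?thesis using ci
          by (intro has_integral_eq[of "{0..u\<^sup>2}" "\<lambda>y. s * t" g]) (simp_all add: ge)
      qed
      have I2: "(g has_integral (x - u\<^sup>2 + 2/3 * s * (x * sqrt x - u\<^sup>2 * sqrt (u\<^sup>2)))) {u\<^sup>2..x}"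
      proof -
        have ge: "g y = 1 + s * sqrt y" if "y \<in> {u\<^sup>2..x}" for y
        proof -
          have "sqrt (u\<^sup>2) \<le> sqrt y" using that by (intro real_sqrt_le_mono) simp
          hence "u \<le> sqrt y" using u0 by simp
          hence "s * u \<le> s * sqrt y" using s0 by (rule mult_left_mono)
          thus ?thesis using su by (simp add: gy)
        qed
        moreover have "((\<lambda>y. 1 + s * sqrt y) has_integral (x - u\<^sup>2 + 2/3 * s * (x * sqrt x - u\<^sup>2 * sqrt (u\<^sup>2)))) {u\<^sup>2..x}"
          by (rule intsq) (use y0x in auto)
        ultimately show ?thesis
          by (intro has_integral_eq[of "{u\<^sup>2..x}" "\<lambda>y. 1 + s * sqrt y" g]) (simp_all add: ge)
      qed
      define Jv where "Jv = (s * t) * u\<^sup>2 + ((t\<^sup>2 - u\<^sup>2) + 2/3 * s * (t\<^sup>2 * t - u\<^sup>2 * u))"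
      have I: "(g has_integral (s * t * u\<^sup>2 + (x - u\<^sup>2 + 2/3 * s * (x * sqrt x - u\<^sup>2 * sqrt (u\<^sup>2))))) {0..x}"
        by (rule has_integral_combine[OF _ y0x I1 I2]) simp
      have E: "s * t * u\<^sup>2 + (x - u\<^sup>2 + 2/3 * s * (x * sqrt x - u\<^sup>2 * sqrt (u\<^sup>2))) = Jv"
        using u0 t0 by (simp add: xt Jv_def)
      have IJ: "(g has_integral Jv) {0..x}" using I unfolding E .
      have "(1 - t\<^sup>2) * (s * t) + (s * t) * u\<^sup>2 + ((t\<^sup>2 - u\<^sup>2)
          + 2/3 * s * (t\<^sup>2 * t - u\<^sup>2 * u)) \<le> r * t"
        by (rule ineqB) (use t0 t1 s2 s0 r0 rr False su in auto)
      hence "(1 - t\<^sup>2) * (s * t) + Jv \<le> r * t" unfolding Jv_def by linarith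
      with IJ show ?thesis by (rule fin)
    qed
  qed
qed

lemma vtilde_bound:
  "\<forall>x. 0 \<le> x \<and> x \<le> 1 \<longrightarrow> vtilde n x \<le> sqrt (2 * real n * x)"
proof (induction n)
  case 0
  then show ?case by simp
next
  case (Suc m)
  show ?case
  proof (intro allI impI)
    fix x :: real assume hx: "0 \<le> x \<and> x \<le> 1"
    define g where "g = (\<lambda>y. max (sqrt (2 * real m * x)) (1 + sqrt (2 * real m * y)))"
    define h where "h = (\<lambda>y. max (vtilde m x) (1 + vtilde m y))"
    obtain J where J1: "(g has_integral J) {0..x}"
      and J2: "(1 - x) * sqrt (2 * real m * x) + J \<le> sqrt (2 * real (Suc m) * x)"
      using explicitE[of x m] hx unfolding g_def by blast
    have vx: "vtilde m x \<le> sqrt (2 * real m * x)" using Suc hx by blast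
    have "integral {0..x} h \<le> J"
    proof (cases "h integrable_on {0..x}")
      case True
      have "integral {0..x} h \<le> integral {0..x} g"
      proof (rule integral_le[OF True])
        show "g integrable_on {0..x}" using J1 by blast
        fix y assume "y \<in> {0..x}"
        hence "vtilde m y \<le> sqrt (2 * real m * y)" using Suc hx by auto
        thus "h y \<le> g y" unfolding h_def g_def using vx by (intro max.mono) auto
      qed
      also have "\<dots> = J" using J1 by (rule integral_unique)
      finally show ?thesis .
    next
      case False
      hence "integral {0..x} h = 0" by (rule not_integrable_integral)
      moreover have "0 \<le> J"
        by (rule has_integral_nonneg[OF J1]) (simp add: g_def le_max_iff_disj)
      ultimately show ?thesis by simp
    qed
    moreover have "(1 - x) * vtilde m x \<le> (1 - x) * sqrt (2 * real m * x)"
      using vx hx by (intro mult_left_mono) auto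
    ultimately have "(1 - x) * vtilde m x + integral {0..x} h \<le> sqrt (2 * real (Suc m) * x)"
      using J2 by linarith
    thus "vtilde (Suc m) x \<le> sqrt (2 * real (Suc m) * x)" by (simp add: h_def)
  qed
qed

theorem mainTheorem4:
  fixes n :: nat
  assumes "n \<ge> 1"
  shows "vtilde n 1 \<le> sqrt (2 * real n)"
  using spec[OF vtilde_bound[of n], of 1] by simp

end
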